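(* Let $\eta\geq 1$ and let $(\phi_n)_{n\in\mathbb N}$ be a family of real univariate polynomials with $\phi_n$ of degree $n$ for every $n$. Let $(\alpha^{m,n}_k)_{k,m,n\in\mathbb N}$ be its linearization coefficients, i.e. the real numbers with $\phi_m\phi_n=\sum_{k=0}^{m+n}\alpha^{m,n}_k\phi_k$ and $\alpha^{m,n}_k=0$ for $k>m+n$, and assume $$\sum_{k=0}^{m+n}\vert\alpha^{m,n}_k\vert = 1\qquad\text{for all } m,n\in\mathbb N.$$ Then for any $x,y\in\ell^1_\eta(\mathbb N,\mathbb C)$, the generalized convolution product $x\ast y$ defined by $(x\ast y)_k=\sum_{m=0}^\infty\sum_{n=0}^\infty x_m y_n\alpha^{m,n}_k$ ($k\in\mathbb N$) is well defined, belongs to $\ell^1_\eta(\mathbb N,\mathbb C)$, and $$\Vert x\ast y\Vert_{\ell^1_\eta}\leq \Vert x\Vert_{\ell^1_\eta}\Vert y\Vert_{\ell^1_\eta};$$ that is, $\ell^1_\eta(\mathbb N,\mathbb C)$ is a Banach algebra for $\ast$.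
   Context: For $\eta\geq1$, $\ell^1_\eta(\mathbb N,\mathbb C)$ denotes the space of complex sequences $x=(x_n)_{n\in\mathbb N}$ with $\Vert x\Vert_{\ell^1_\eta}:=\sum_{n\in\mathbb N}\vert x_n\vert\eta^n<\infty$. *)

theory Defs
  imports "HOL-Analysis.Analysis" "HOL-Computational_Algebra.Polynomial"
begin

definition in_ell1 :: "real \<Rightarrow> (nat \<Rightarrow> complex) \<Rightarrow> bool" where
  "in_ell1 \<eta> x \<longleftrightarrow> summable (\<lambda>n. norm (x n) * \<eta> ^ n)"

definition ell1_norm :: "real \<Rightarrow> (nat \<Rightarrow> complex) \<Rightarrow> real" where
  "ell1_norm \<eta> x = (\<Sum>n. norm (x n) * \<eta> ^ n)"

definition gconv :: "(nat \<Rightarrow> nat \<Rightarrow> nat \<Rightarrow> real) \<Rightarrow> (nat \<Rightarrow> complex) \<Rightarrow> (nat \<Rightarrow> complex) \<Rightarrow> nat \<Rightarrow> complex" where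
  "gconv \<alpha> x y k = (\<Sum>m. \<Sum>n. x m * y n * complex_of_real (\<alpha> m n k))"

end

theory Submission
  imports Defs
begin

lemma prod_has_sum:
  fixes A B :: "nat \<Rightarrow> real"
  assumes "(A has_sum SA) UNIV" "(B has_sum SB) UNIV" "\<And>m. A m \<ge> 0" "\<And>n. B n \<ge> 0"
  shows "((\<lambda>(m,n). A m * B n) has_sum (SA * SB)) UNIV"
proof -
  have f: "((\<lambda>n. (\<lambda>(m,n). A m * B n) (m, n)) has_sum A m * SB) UNIV" for m
    using has_sum_cmult_right[OF assms(2), of "A m"] by simp
  have g: "((\<lambda>m. A m * SB) has_sum SA * SB) UNIV"
    using has_sum_cmult_left[OF assms(1)] by simp
  have s: "(\<lambda>(m,n). A m * B n) summable_on Sigma UNIV (\<lambda>_. UNIV)"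
    by (rule summable_on_SigmaI[OF f]) (use g assms in \<open>auto simp: summable_on_def\<close>)
  have "((\<lambda>(m,n). A m * B n) has_sum (SA * SB)) (Sigma UNIV (\<lambda>_. UNIV))"
    by (rule has_sum_SigmaI[OF f g s])
  thus ?thesis by simp
qed

lemma suminf_has_sum:
  fixes f :: "nat \<Rightarrow> real"
  assumes "summable f" "\<And>n. f n \<ge> 0"
  shows "(f has_sum suminf f) UNIV"
  using sums_nonneg_imp_has_sum[OF summable_sums[OF assms(1)] assms(2)] .

theorem lemma2p9:
  fixes \<eta> :: real and \<phi> :: "nat \<Rightarrow> real poly" and \<alpha> :: "nat \<Rightarrow> nat \<Rightarrow> nat \<Rightarrow> real"
    and x y :: "nat \<Rightarrow> complex"
  assumes eta: "\<eta> \<ge> 1"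
    and deg: "\<And>n. degree (\<phi> n) = n"
    and lin: "\<And>m n. \<phi> m * \<phi> n = (\<Sum>k=0..m+n. smult (\<alpha> m n k) (\<phi> k))"
    and zero: "\<And>m n k. k > m + n \<Longrightarrow> \<alpha> m n k = 0"
    and one: "\<And>m n. (\<Sum>k=0..m+n. \<bar>\<alpha> m n k\<bar>) = 1"
    and x: "in_ell1 \<eta> x" and y: "in_ell1 \<eta> y"
  shows "(\<forall>k. (\<lambda>(m, n). x m * y n * complex_of_real (\<alpha> m n k)) summable_on UNIV
            \<and> (\<forall>m. summable (\<lambda>n. x m * y n * complex_of_real (\<alpha> m n k)))
            \<and> summable (\<lambda>m. \<Sum>n. x m * y n * complex_of_real (\<alpha> m n k))
            \<and> gconv \<alpha> x y k = (\<Sum>\<^sub>\<infinity>(m, n). x m * y n * complex_of_real (\<alpha> m n k)))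
         \<and> in_ell1 \<eta> (gconv \<alpha> x y)
         \<and> ell1_norm \<eta> (gconv \<alpha> x y) \<le> ell1_norm \<eta> x * ell1_norm \<eta> y"
proof -
  define A where "A m = norm (x m) * \<eta> ^ m" for m
  define B where "B n = norm (y n) * \<eta> ^ n" for n
  have A0: "A m \<ge> 0" for m using eta by (simp add: A_def)
  have B0: "B n \<ge> 0" for n using eta by (simp add: B_def)
  have "summable A" using x by (simp add: in_ell1_def A_def[abs_def])
  moreover have "ell1_norm \<eta> x = suminf A" by (simp add: ell1_norm_def A_def[abs_def])
  ultimately have hA: "(A has_sum ell1_norm \<eta> x) UNIV"
    using suminf_has_sum[of A] A0 by simp
  have "summable B" using y by (simp add: in_ell1_def B_def[abs_def])
  moreover have "ell1_norm \<eta> y = suminf B" by (simp add: ell1_norm_def B_def[abs_def])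
  ultimately have hB: "(B has_sum ell1_norm \<eta> y) UNIV"
    using suminf_has_sum[of B] B0 by simp
  have hAB: "((\<lambda>(m,n). A m * B n) has_sum (ell1_norm \<eta> x * ell1_norm \<eta> y)) UNIV"
    by (rule prod_has_sum[OF hA hB A0 B0])
  define T where "T = (\<lambda>((m,n),k). norm (x m) * norm (y n) * \<bar>\<alpha> m n k\<bar> * \<eta> ^ k)"
  define g where "g = (\<lambda>(m,n). \<Sum>k\<in>{0..m+n}. T ((m,n),k))"
  have T0: "T p \<ge> 0" for p using eta by (auto simp: T_def split: prod.splits)
  have fib: "((\<lambda>k. T (p,k)) has_sum g p) UNIV" for p
  proof (cases p)
    case (Pair m n)
    show ?thesis unfolding Pair
      by (rule has_sum_finite_neutralI[of "{0..m+n}"]) (auto simp: T_def g_def zero)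
  qed
  have gle: "g p \<le> (\<lambda>(m,n). A m * B n) p" for p
  proof (cases p)
    case (Pair m n)
    have "g p = (\<Sum>k\<in>{0..m+n}. norm (x m) * norm (y n) * (\<bar>\<alpha> m n k\<bar> * \<eta> ^ k))"
      by (simp add: Pair g_def T_def mult.assoc)
    also have "\<dots> \<le> (\<Sum>k\<in>{0..m+n}. norm (x m) * norm (y n) * (\<bar>\<alpha> m n k\<bar> * \<eta> ^ (m+n)))"
      by (intro sum_mono mult_left_mono power_increasing) (use eta in auto)
    also have "\<dots> = norm (x m) * norm (y n) * \<eta> ^ (m+n) * (\<Sum>k\<in>{0..m+n}. \<bar>\<alpha> m n k\<bar>)"
      by (simp add: sum_distrib_left sum_distrib_right mult_ac)
    also have "\<dots> = A m * B n"
      by (simp add: one A_def B_def power_add mult_ac)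
    finally show ?thesis by (simp add: Pair)
  qed
  have g0: "g p \<ge> 0" for p using fib[of p] T0 has_sum_nonneg by blast
  have gs: "g summable_on UNIV"
    by (rule summable_on_comparison_test[OF has_sum_imp_summable[OF hAB]]) (use gle g0 in auto)
  have Ts: "T summable_on Sigma UNIV (\<lambda>_. UNIV)"
    by (rule summable_on_SigmaI[OF fib gs]) (use T0 in auto)
  have hg: "(g has_sum infsum T UNIV) UNIV"
  proof -
    have "(T has_sum infsum T (Sigma UNIV (\<lambda>_. UNIV))) (Sigma UNIV (\<lambda>_. UNIV))"
      using Ts by (rule has_sum_infsum)
    from has_sum_Sigma'[OF this fib] show ?thesis by simp
  qed
  have Tle: "infsum T UNIV \<le> ell1_norm \<eta> x * ell1_norm \<eta> y"
    using has_sum_mono[OF hg hAB] gle by auto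
  define F where "F = (\<lambda>(k,p). T (p,k))"
  have Fs: "F summable_on Sigma UNIV (\<lambda>_. UNIV)"
  proof -
    have "T summable_on (UNIV \<times> UNIV)" using Ts by simp
    hence "(\<lambda>(k,p). T (p,k)) summable_on (UNIV \<times> UNIV)"
      using summable_on_swap[THEN iffD1] by blast
    thus ?thesis by (simp add: F_def)
  qed
  have FhT: "(F has_sum infsum T UNIV) (Sigma UNIV (\<lambda>_. UNIV))"
  proof -
    have "(T has_sum infsum T UNIV) (UNIV \<times> UNIV)"
      using has_sum_infsum[OF Ts] by simp
    hence "((\<lambda>(k,p). T (p,k)) has_sum infsum T UNIV) (UNIV \<times> UNIV)"
      using has_sum_swap[THEN iffD1] by blast
    thus ?thesis by (simp add: F_def)
  qed
  define h where "h k = infsum (\<lambda>p. T (p,k)) UNIV" for k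
  have Tk: "(\<lambda>p. T (p,k)) summable_on UNIV" for k
    using summable_on_SigmaD1[of "\<lambda>k p. T (p,k)" UNIV "\<lambda>_. UNIV" k] Fs
    by (simp add: F_def case_prod_unfold)
  have hh: "(h has_sum infsum T UNIV) UNIV"
    using has_sum_Sigma'[OF FhT, of h] Tk by (simp add: F_def h_def has_sum_infsum)
  define c where "c k = (\<lambda>(m,n). x m * y n * complex_of_real (\<alpha> m n k))" for k
  have normc: "norm (c k p) * \<eta> ^ k = T (p,k)" for k p
    by (simp add: c_def T_def norm_mult split: prod.splits)
  have cle: "norm (c k p) \<le> T (p,k)" for k p
  proof -
    have "norm (c k p) * 1 \<le> norm (c k p) * \<eta> ^ k"
      by (intro mult_left_mono) (use eta in \<open>auto simp: one_le_power\<close>)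
    thus ?thesis using normc by simp
  qed
  have cabs: "(\<lambda>p. norm (c k p)) summable_on UNIV" for k
    by (rule summable_on_comparison_test[OF Tk]) (use cle in auto)
  have cs: "c k summable_on UNIV" for k
    by (rule abs_summable_summable[OF cabs])
  have ceq: "infsum f UNIV = suminf f" if "f summable_on UNIV" for f :: "nat \<Rightarrow> complex"
    using sums_unique[OF has_sum_imp_sums[OF has_sum_infsum[OF that]]] by simp
  have part1: "(\<lambda>(m, n). x m * y n * complex_of_real (\<alpha> m n k)) summable_on UNIV
            \<and> (\<forall>m. summable (\<lambda>n. x m * y n * complex_of_real (\<alpha> m n k)))
            \<and> summable (\<lambda>m. \<Sum>n. x m * y n * complex_of_real (\<alpha> m n k))
            \<and> gconv \<alpha> x y k = (\<Sum>\<^sub>\<infinity>(m, n). x m * y n * complex_of_real (\<alpha> m n k))" for k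
  proof -
    have cs': "(\<lambda>(m, n). x m * y n * complex_of_real (\<alpha> m n k)) summable_on Sigma UNIV (\<lambda>_. UNIV)"
      using cs[of k] by (simp add: c_def)
    have rows: "(\<lambda>n. x m * y n * complex_of_real (\<alpha> m n k)) summable_on UNIV" for m
      using summable_on_SigmaD1[OF cs', of m] by simp
    have rsum: "(\<lambda>m. infsum (\<lambda>n. x m * y n * complex_of_real (\<alpha> m n k)) UNIV) summable_on UNIV"
      using summable_on_SigmaD[of "\<lambda>(m, n). x m * y n * complex_of_real (\<alpha> m n k)" UNIV "\<lambda>_. UNIV"] cs' rows
      by simp
    have eqr: "infsum (\<lambda>n. x m * y n * complex_of_real (\<alpha> m n k)) UNIV = (\<Sum>n. x m * y n * complex_of_real (\<alpha> m n k))" for m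
      using ceq[OF rows[of m]] .
    have rsum': "(\<lambda>m. \<Sum>n. x m * y n * complex_of_real (\<alpha> m n k)) summable_on UNIV"
      using rsum by (simp add: eqr)
    have "gconv \<alpha> x y k = (\<Sum>m. \<Sum>n. x m * y n * complex_of_real (\<alpha> m n k))"
      by (simp add: gconv_def)
    also have "\<dots> = infsum (\<lambda>m. \<Sum>n. x m * y n * complex_of_real (\<alpha> m n k)) UNIV"
      using ceq[OF rsum'] by simp
    also have "\<dots> = infsum (\<lambda>m. infsum (\<lambda>n. x m * y n * complex_of_real (\<alpha> m n k)) UNIV) UNIV"
      by (simp add: eqr)
    also have "\<dots> = (\<Sum>\<^sub>\<infinity>(m, n). x m * y n * complex_of_real (\<alpha> m n k))"
      using infsum_Sigma_banach[OF cs'] by simp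
    finally show ?thesis
      using cs'  rows rsum' summable_on_imp_summable by auto
  qed
  have gk: "norm (gconv \<alpha> x y k) * \<eta> ^ k \<le> h k" for k
  proof -
    have "gconv \<alpha> x y k = infsum (c k) UNIV" using part1[of k] by (simp add: c_def)
    hence "norm (gconv \<alpha> x y k) \<le> infsum (\<lambda>p. norm (c k p)) UNIV"
      using norm_infsum_bound[OF cabs[of k]] by simp
    hence "norm (gconv \<alpha> x y k) * \<eta> ^ k \<le> infsum (\<lambda>p. norm (c k p)) UNIV * \<eta> ^ k"
      by (rule mult_right_mono) (use eta in auto)
    also have "\<dots> = infsum (\<lambda>p. norm (c k p) * \<eta> ^ k) UNIV"
      by (rule infsum_cmult_left[symmetric]) (use cabs in auto)
    also have "\<dots> = h k" by (simp add: normc h_def)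
    finally show ?thesis .
  qed
  have gn0: "norm (gconv \<alpha> x y k) * \<eta> ^ k \<ge> 0" for k using eta by simp
  have gsum_on: "(\<lambda>k. norm (gconv \<alpha> x y k) * \<eta> ^ k) summable_on UNIV"
    by (rule summable_on_comparison_test[OF has_sum_imp_summable[OF hh]]) (use gk gn0 in auto)
  have gsum: "summable (\<lambda>k. norm (gconv \<alpha> x y k) * \<eta> ^ k)"
    using summable_on_imp_summable[OF gsum_on] .
  have "ell1_norm \<eta> (gconv \<alpha> x y) \<le> infsum T UNIV"
    unfolding ell1_norm_def
    by (rule has_sum_mono[OF suminf_has_sum[OF gsum gn0] hh]) (use gk in auto)
  with Tle part1 gsum show ?thesis by (auto simp: in_ell1_def)
qed
end
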